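(* Let $n\ge 2$, $r>0$, $f\in C(I_n)$ where $I_n=\{\bm{x}\in\mathbb{R}^n: |x_i|\le r,\ i=1,\dots,n\}$, and let $h^f_*\in\mathcal{H}_-(I_n,f)$. Assume that $f-h^f_*=0$ on $D_n$. Then $h^f_*$ is a best one-sided $L^1$-approximant from below to $f$ with respect to $\mathcal{H}(I_n)$, i.e. $\|f-h^f_*\|_1\le\|f-h\|_1$ for every $h\in\mathcal{H}_-(I_n,f)$.
   Context: $\mathcal{H}(I_n)$ is the space of functions harmonic ($C^2$ with vanishing Laplacian) in some domain containing $I_n$; $\mathcal{H}_-(I_n,f)=\{h\in\mathcal{H}(I_n): h\le f \text{ on } I_n\}$; $\|g\|_1=\int_{I_n}|g|\,d\lambda_n$ with $\lambda_n$ Lebesgue measure. For $1\le i<j\le n$, $D^{ij}_n=\{\bm{x}\in I_n : |x_k|\le |x_i|=|x_j| \text{ for all } k\ne i,j\}$, and $D_n=\bigcup_{1\le i<j\le n}D^{ij}_n$. *)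

theory Defs
  imports "HOL-Analysis.Analysis"
begin

definition cube :: "real \<Rightarrow> (real^'n) set" where
  "cube r = {x. \<forall>i. \<bar>x $ i\<bar> \<le> r}"

definition harmonic_on :: "(real^'n) set \<Rightarrow> (real^'n \<Rightarrow> real) \<Rightarrow> bool" where
  "harmonic_on U h \<longleftrightarrow> open U \<and>
     (\<exists>Dh :: real^'n \<Rightarrow> ((real^'n) \<Rightarrow>\<^sub>L real).
      \<exists>D2h :: real^'n \<Rightarrow> ((real^'n) \<Rightarrow>\<^sub>L ((real^'n) \<Rightarrow>\<^sub>L real)).
        (\<forall>x\<in>U. (h has_derivative blinfun_apply (Dh x)) (at x)) \<and>
        (\<forall>x\<in>U. (Dh has_derivative blinfun_apply (D2h x)) (at x)) \<and>
        continuous_on U D2h \<and>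
        (\<forall>x\<in>U. (\<Sum>i\<in>UNIV. blinfun_apply (blinfun_apply (D2h x) (axis i 1)) (axis i 1)) = 0))"

definition harmonic_near :: "(real^'n) set \<Rightarrow> (real^'n \<Rightarrow> real) set" where
  "harmonic_near K = {h. \<exists>U. K \<subseteq> U \<and> harmonic_on U h}"

definition harmonic_below :: "(real^'n) set \<Rightarrow> (real^'n \<Rightarrow> real) \<Rightarrow> (real^'n \<Rightarrow> real) set" where
  "harmonic_below K f = {h \<in> harmonic_near K. \<forall>x\<in>K. h x \<le> f x}"

definition L1norm :: "(real^'n) set \<Rightarrow> (real^'n \<Rightarrow> real) \<Rightarrow> real" where
  "L1norm K g = integral\<^sup>L (lebesgue_on K) (\<lambda>x. \<bar>g x\<bar>)"

definition diag_set :: "real \<Rightarrow> (real^'n) set" where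
  "diag_set r = (\<Union>i. \<Union>j\<in>UNIV - {i}.
      {x \<in> cube r. \<bar>x $ i\<bar> = \<bar>x $ j\<bar> \<and> (\<forall>k. k \<noteq> i \<and> k \<noteq> j \<longrightarrow> \<bar>x $ k\<bar> \<le> \<bar>x $ i\<bar>)})"

end

theory Submission
  imports Defs
begin

lemma line_ineq:
  fixes u v w :: "real \<Rightarrow> real" and r m :: real
  assumes m0: "0 \<le> m" and mr: "m \<le> r"
    and d1: "\<And>t. t \<in> {-r..r} \<Longrightarrow> (u has_real_derivative v t) (at t)"
    and d2: "\<And>t. t \<in> {-r..r} \<Longrightarrow> (v has_real_derivative w t) (at t)"
  shows "((\<lambda>t. (if m < \<bar>t\<bar> then u t else 0) - (r - max \<bar>t\<bar> m)^2/2 * w t)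
          has_integral (r-m)*(u m + u(-m))) {-r..r}"
proof -
  let ?H = "\<lambda>t. (if m < \<bar>t\<bar> then u t else 0) - (r - max \<bar>t\<bar> m)^2/2 * w t"
  define A where "A t = (t - r) * u t - (r-t)^2/2 * v t" for t
  define A2 where "A2 t = (t + r) * u t - (r+t)^2/2 * v t" for t
  define B where "B t = - ((r-m)^2/2) * v t" for t
  have IA: "((\<lambda>t. u t - (r-t)^2/2 * w t) has_integral (A r - A m)) {m..r}"
  proof (rule fundamental_theorem_of_calculus)
    fix t assume t: "t \<in> {m..r}"
    then have t': "t \<in> {-r..r}" using m0 by auto
    have "(A has_real_derivative (u t - (r-t)^2/2 * w t)) (at t)"
      unfolding A_def
      by (rule derivative_eq_intros d1[OF t'] d2[OF t'] refl | simp)+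
        (simp add: power2_eq_square field_simps)
    then show "(A has_vector_derivative (u t - (r-t)^2/2 * w t)) (at t within {m..r})"
      using has_real_derivative_iff_has_vector_derivative has_field_derivative_at_within by blast
  qed (use mr in auto)
  have IA2: "((\<lambda>t. u t - (r+t)^2/2 * w t) has_integral (A2 (-m) - A2 (-r))) {-r..-m}"
  proof (rule fundamental_theorem_of_calculus)
    fix t assume t: "t \<in> {-r..-m}"
    then have t': "t \<in> {-r..r}" using m0 by auto
    have "(A2 has_real_derivative (u t - (r+t)^2/2 * w t)) (at t)"
      unfolding A2_def
      by (rule derivative_eq_intros d1[OF t'] d2[OF t'] refl | simp)+
        (simp add: power2_eq_square field_simps)
    then show "(A2 has_vector_derivative (u t - (r+t)^2/2 * w t)) (at t within {-r..-m})"
      using has_real_derivative_iff_has_vector_derivative has_field_derivative_at_within by blast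
  qed (use mr in auto)
  have IB: "((\<lambda>t. - ((r-m)^2/2) * w t) has_integral (B m - B (-m))) {-m..m}"
  proof (rule fundamental_theorem_of_calculus)
    fix t assume t: "t \<in> {-m..m}"
    then have t': "t \<in> {-r..r}" using mr by auto
    have "(B has_real_derivative (- ((r-m)^2/2) * w t)) (at t)"
      unfolding B_def
      by (rule derivative_eq_intros d1[OF t'] d2[OF t'] refl | simp)+
    then show "(B has_vector_derivative (- ((r-m)^2/2) * w t)) (at t within {-m..m})"
      using has_real_derivative_iff_has_vector_derivative has_field_derivative_at_within by blast
  qed (use m0 in auto)
  have JA: "(?H has_integral (A r - A m)) {m..r}"
    by (rule has_integral_spike_finite[of "{m}", OF _ _ IA]) (use m0 in auto)
  have JA2: "(?H has_integral (A2 (-m) - A2 (-r))) {-r..-m}"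
    by (rule has_integral_spike_finite[of "{-m}", OF _ _ IA2]) (use m0 in auto)
  have JB: "(?H has_integral (B m - B (-m))) {-m..m}"
    by (rule has_integral_spike_finite[of "{}", OF _ _ IB]) auto
  have "(?H has_integral ((A2 (-m) - A2 (-r)) + (B m - B (-m)))) {-r..m}"
    by (rule has_integral_combine[OF _ _ JA2 JB]) (use m0 mr in auto)
  then have "(?H has_integral (((A2 (-m) - A2 (-r)) + (B m - B (-m))) + (A r - A m))) {-r..r}"
    using m0 mr by (intro has_integral_combine[OF _ _ _ JA]) auto
  moreover have "((A2 (-m) - A2 (-r)) + (B m - B (-m))) + (A r - A m) = (r-m)*(u m + u(-m))"
    unfolding A_def A2_def B_def by (simp add: algebra_simps power2_eq_square)
  ultimately show ?thesis by simp
qed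

definition vupd :: "real^'n \<Rightarrow> 'n \<Rightarrow> real \<Rightarrow> real^'n" where
  "vupd x k t = (\<chi> j. if j = k then t else x$j)"

lemma sum_Basis_comp: "(\<Sum>b\<in>Basis. c b *\<^sub>R b :: real^'n) $ j = c (axis j 1)"
proof -
  have "(\<Sum>b\<in>Basis. c b *\<^sub>R b :: real^'n) $ j = (\<Sum>b\<in>Basis. c b *\<^sub>R b) \<bullet> axis j 1"
    by (rule cart_eq_inner_axis)
  also have "\<dots> = (\<Sum>b\<in>Basis. c b * (b \<bullet> axis j 1))"
    by (simp add: inner_sum_left)
  also have "\<dots> = (\<Sum>b\<in>Basis. if b = axis j 1 then c b else 0)"
    by (rule sum.cong) (auto simp: inner_Basis)
  also have "\<dots> = c (axis j 1)" by simp
  finally show ?thesis .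
qed

lemma axis1_eq: "axis i (1::real) = axis k 1 \<longleftrightarrow> i = k"
  by (simp add: axis_eq_axis)

lemma comp_upd: "(\<Sum>b\<in>Basis. (F(axis k 1 := y)) b *\<^sub>R b :: real^'n) $ j = (if j = k then y else F (axis j 1))"
  by (simp only: sum_Basis_comp fun_upd_apply axis1_eq)

lemma if_dup: "(if P then a else if P then c else b) = (if P then a else b)"
  by simp

lemma slice_nonpos:
  fixes G :: "real^'n \<Rightarrow> real"
  assumes int: "integrable lborel G"
   and line: "\<And>x. integral\<^sup>L lborel (\<lambda>t. G (vupd x k t)) \<le> 0"
  shows "integral\<^sup>L lborel G \<le> 0"
proof -
  let ?S = "\<lambda>F. \<Sum>b\<in>Basis. F b *\<^sub>R b :: real^'n"
  let ?i = "axis k (1::real) :: real^'n"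
  let ?I = "Basis - {?i}"
  interpret P: product_sigma_finite "\<lambda>_::real^'n. lborel::real measure"
    by standard
  have Gm: "G \<in> borel_measurable borel" using int by auto
  have Sm: "?S \<in> measurable (Pi\<^sub>M Basis (\<lambda>_. lborel)) borel"
    by measurable
  have eq: "integral\<^sup>L lborel G = integral\<^sup>L (Pi\<^sub>M Basis (\<lambda>_. lborel)) (\<lambda>F. G (?S F))"
    by (subst lborel_eq[where 'a="real^'n"]) (simp add: integral_distr Sm Gm)
  have int2: "integrable (Pi\<^sub>M Basis (\<lambda>_. lborel)) (\<lambda>F. G (?S F))"
    using int by (subst (asm) lborel_eq[where 'a="real^'n"]) (simp add: integrable_distr_eq Sm Gm)
  have B: "Basis = insert ?i ?I" by auto
  have "integral\<^sup>L (Pi\<^sub>M Basis (\<lambda>_. lborel)) (\<lambda>F. G (?S F))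
      = (\<integral>F. (\<integral>y. G (?S (F(?i:=y))) \<partial>lborel) \<partial>Pi\<^sub>M ?I (\<lambda>_. lborel))"
    using int2 by (subst B, subst P.product_integral_insert) (auto simp: insert_absorb)
  also have "\<dots> \<le> 0"
  proof -
    have "\<And>F. (\<integral>y. G (?S (F(?i:=y))) \<partial>lborel) \<le> 0"
    proof -
      fix F :: "real^'n \<Rightarrow> real"
      define x0 where "x0 = ?S (F(?i:=0))"
      have e: "\<And>y. ?S (F(?i:=y)) = vupd x0 k y" unfolding x0_def
        by (subst vec_eq_iff) (simp only: comp_upd vupd_def vec_lambda_beta if_dup simp_thms)
      then show "(\<integral>y. G (?S (F(?i:=y))) \<partial>lborel) \<le> 0" using line[of x0] by (simp only: e)
    qed
    then have "0 \<le> (\<integral>F. - (\<integral>y. G (?S (F(?i:=y))) \<partial>lborel) \<partial>Pi\<^sub>M ?I (\<lambda>_. lborel))"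
      by (intro integral_nonneg_AE) (auto intro!: AE_I2 simp: le_minus_iff)
    then show ?thesis by simp
  qed
  finally show ?thesis using eq by simp
qed


lemma vupd_nth [simp]: "vupd x k t $ j = (if j = k then t else x $ j)"
  by (simp add: vupd_def)

lemma vupd_affine: "vupd x k t = vupd x k 0 + t *\<^sub>R axis k 1"
  by (simp add: vec_eq_iff axis_def)

lemma vupd_deriv: "((\<lambda>t. vupd x k t) has_derivative (\<lambda>s. s *\<^sub>R axis k 1)) (at t)"
proof -
  have "((\<lambda>t. vupd x k 0 + t *\<^sub>R axis k 1) has_derivative (\<lambda>s. s *\<^sub>R axis k 1)) (at t)"
    by (rule derivative_eq_intros refl)+ simp
  then show ?thesis by (subst vupd_affine) simp
qed

lemma line_deriv:
  fixes g :: "real^'n \<Rightarrow> 'b::real_normed_vector" and L :: "(real^'n) \<Rightarrow>\<^sub>L 'b"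
  assumes "(g has_derivative blinfun_apply L) (at (vupd x k t))"
  shows "((\<lambda>t. g (vupd x k t)) has_vector_derivative (blinfun_apply L (axis k 1))) (at t)"
proof -
  have "((g \<circ> (\<lambda>t. vupd x k t)) has_derivative (blinfun_apply L \<circ> (\<lambda>s. s *\<^sub>R axis k 1))) (at t)"
    by (rule diff_chain_at[OF vupd_deriv assms])
  moreover have "(blinfun_apply L \<circ> (\<lambda>s. s *\<^sub>R axis k 1)) = (\<lambda>s. s *\<^sub>R blinfun_apply L (axis k 1))"
    by (rule ext) (simp add: blinfun.scaleR_right)
  ultimately show ?thesis by (simp add: has_vector_derivative_def comp_def)
qed

lemma card_other:
  assumes "CARD('n) \<ge> 2"
  shows "(UNIV - {k::'n}) \<noteq> {}"
proof
  assume "UNIV - {k} = {}"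
  then have "UNIV \<subseteq> {k}" by auto
  then have "CARD('n) \<le> 1" by (metis card.empty card.insert card_mono finite.emptyI finite.insertI empty_iff One_nat_def)
  then show False using assms by simp
qed

lemma line_deriv2:
  fixes Dg :: "real^'n \<Rightarrow> ((real^'n) \<Rightarrow>\<^sub>L real)" and L :: "(real^'n) \<Rightarrow>\<^sub>L ((real^'n) \<Rightarrow>\<^sub>L real)"
  assumes "(Dg has_derivative blinfun_apply L) (at (vupd x k t))"
  shows "((\<lambda>t. blinfun_apply (Dg (vupd x k t)) e) has_vector_derivative
           (blinfun_apply (blinfun_apply L (axis k 1)) e)) (at t)"
  using bounded_linear.has_vector_derivative[OF blinfun.bounded_linear_left line_deriv[OF assms]] .

lemma diag_memI:
  assumes "x \<in> cube r" "i \<noteq> j" "\<bar>x$i\<bar> = \<bar>x$j\<bar>" "\<And>l. \<bar>x$l\<bar> \<le> \<bar>x$i\<bar>"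
  shows "x \<in> diag_set r"
proof -
  have A: "x \<in> {x \<in> cube r. \<bar>x$i\<bar> = \<bar>x$j\<bar> \<and> (\<forall>k. k \<noteq> i \<and> k \<noteq> j \<longrightarrow> \<bar>x$k\<bar> \<le> \<bar>x$i\<bar>)}"
    using assms by simp
  have B: "j \<in> UNIV - {i}" using assms(2) by simp
  show ?thesis unfolding diag_set_def
    apply (rule UN_I[where a=i], rule UNIV_I)
    apply (rule UN_I[where a=j, OF B])
    by (rule A)
qed

lemma Max_cube:
  fixes x :: "real^'n"
  assumes "x \<in> cube r"
  shows "0 \<le> Max ((\<lambda>j. \<bar>x$j\<bar>) ` UNIV)" "Max ((\<lambda>j. \<bar>x$j\<bar>) ` UNIV) \<le> r"
proof -
  obtain j :: 'n where True by simp
  have "\<bar>x$j\<bar> \<le> Max ((\<lambda>j. \<bar>x$j\<bar>) ` UNIV)" by (rule Max_ge) auto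
  then show "0 \<le> Max ((\<lambda>j. \<bar>x$j\<bar>) ` UNIV)" by linarith
  show "Max ((\<lambda>j. \<bar>x$j\<bar>) ` UNIV) \<le> r" using assms by (auto simp: cube_def)
qed

lemma cube_cbox: "cube r = cbox (\<chi> i. -r) (\<chi> i. r)"
proof (rule set_eqI)
  fix x :: "real^'n"
  show "x \<in> cube r \<longleftrightarrow> x \<in> cbox (\<chi> i. -r) (\<chi> i. r)"
    unfolding cube_def mem_box_cart mem_Collect_eq vec_lambda_beta abs_le_iff
    by (meson minus_le_iff)
qed

lemma compact_cube: "compact (cube r)"
  by (simp add: cube_cbox)

lemma core:
  fixes g :: "real^'n \<Rightarrow> real" and Dg :: "real^'n \<Rightarrow> ((real^'n) \<Rightarrow>\<^sub>L real)"
    and D2g :: "real^'n \<Rightarrow> ((real^'n) \<Rightarrow>\<^sub>L ((real^'n) \<Rightarrow>\<^sub>L real))"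
  assumes card: "CARD('n) \<ge> 2" and r: "r > 0"
    and U: "open U" "cube r \<subseteq> U"
    and dg: "\<And>x. x\<in>U \<Longrightarrow> (g has_derivative blinfun_apply (Dg x)) (at x)"
    and d2g: "\<And>x. x\<in>U \<Longrightarrow> (Dg has_derivative blinfun_apply (D2g x)) (at x)"
    and cont: "continuous_on U D2g"
    and lap: "\<And>x. x\<in>U \<Longrightarrow> (\<Sum>i\<in>UNIV. blinfun_apply (blinfun_apply (D2g x) (axis i 1)) (axis i 1)) = 0"
    and neg: "\<And>x. x\<in>diag_set r \<Longrightarrow> g x \<le> 0"
  shows "integral (cube r) g \<le> 0"
proof -
  define C where "C = (cube r :: (real^'n) set)"
  define Ok where "Ok k = {x::real^'n. \<forall>j. j \<noteq> k \<longrightarrow> \<bar>x$j\<bar> < \<bar>x$k\<bar>}" for k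
  define W where "W x = (r - Max ((\<lambda>j. \<bar>x$j\<bar>) ` UNIV))^2/2" for x :: "real^'n"
  define g2 where "g2 k x = blinfun_apply (blinfun_apply (D2g x) (axis k 1)) (axis k 1)" for k x
  define G where "G k x = indicator C x * ((if x \<in> Ok k then g x else 0) - W x * g2 k x)" for k x
  have CU: "C \<subseteq> U" using U C_def by simp
  have compC: "compact C" by (simp add: C_def compact_cube)
  have borC: "C \<in> sets borel" using compC by (simp add: compact_imp_closed)
  have contg: "continuous_on C g"
    using dg CU by (meson continuous_at_imp_continuous_on has_derivative_continuous subsetD)
  have contg2: "continuous_on C (g2 k)" for k
  proof -
    have "continuous_on U (g2 k)" unfolding g2_def
      by (intro continuous_intros cont)
    then show ?thesis using CU continuous_on_subset by blast
  qed
  have Wm[measurable]: "W \<in> borel_measurable borel"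
    unfolding W_def by measurable
  have Om[measurable]: "Ok k \<in> sets borel" for k
  proof -
    have "Ok k = (\<Inter>j\<in>UNIV-{k}. {x. \<bar>x$j\<bar> < \<bar>x$k\<bar>})" by (auto simp: Ok_def)
    moreover have "open (\<Inter>j\<in>UNIV-{k}. {x::real^'n. \<bar>x$j\<bar> < \<bar>x$k\<bar>})"
      by (intro open_INT ballI open_Collect_less continuous_intros) auto
    ultimately show ?thesis by simp
  qed
  have gm[measurable]: "(\<lambda>x. indicator C x *\<^sub>R g x) \<in> borel_measurable borel"
    by (rule borel_measurable_continuous_on_indicator[OF borC contg])
  have g2m[measurable]: "(\<lambda>x. indicator C x *\<^sub>R g2 k x) \<in> borel_measurable borel" for k
    by (rule borel_measurable_continuous_on_indicator[OF borC contg2])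
  have Gm: "G k \<in> borel_measurable borel" for k
  proof -
    have "G k = (\<lambda>x. indicator (Ok k) x * (indicator C x *\<^sub>R g x) - W x * (indicator C x *\<^sub>R g2 k x))"
      by (rule ext) (auto simp: G_def indicator_def)
    moreover have "(\<lambda>x. indicator (Ok k) x * (indicator C x *\<^sub>R g x) - W x * (indicator C x *\<^sub>R g2 k x)) \<in> borel_measurable borel"
      by measurable
    ultimately show ?thesis by simp
  qed
  have Wb: "\<bar>W x\<bar> \<le> r^2/2" if "x \<in> C" for x
  proof -
    let ?M = "Max ((\<lambda>j. \<bar>x$j\<bar>) ` UNIV)"
    have xc: "x \<in> cube r" using that C_def by simp
    have "0 \<le> ?M" "?M \<le> r" by (rule Max_cube[OF xc])+
    then have le: "(r - ?M)^2 \<le> r^2" using r by (intro power_mono) linarith+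
    have e: "W x = (r - ?M)^2/2" by (simp only: W_def)
    have "0 \<le> (r - ?M)^2" by (rule zero_le_power2)
    then show ?thesis using e le by (simp only: abs_le_iff) linarith
  qed
  obtain Bg where Bg: "\<And>x. x \<in> C \<Longrightarrow> \<bar>g x\<bar> \<le> Bg"
    using compact_imp_bounded[OF compact_continuous_image[OF contg compC]]
    unfolding bounded_iff by auto
  have Gint: "integrable lborel (G k)" for k
  proof -
    obtain B2 where B2: "\<And>x. x \<in> C \<Longrightarrow> \<bar>g2 k x\<bar> \<le> B2"
      using compact_imp_bounded[OF compact_continuous_image[OF contg2[of k] compC]]
      unfolding bounded_iff by auto
    let ?B = "Bg + r^2/2 * B2"
    have "integrable lborel (\<lambda>x. indicator C x *\<^sub>R ?B)"
      by (rule borel_integrable_compact[OF compC continuous_on_const])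
    moreover have "G k \<in> borel_measurable lborel" using Gm by simp
    moreover have "AE x in lborel. norm (G k x) \<le> norm (indicator C x *\<^sub>R ?B)"
    proof (rule AE_I2)
      fix x show "norm (G k x) \<le> norm (indicator C x *\<^sub>R ?B)"
      proof (cases "x \<in> C")
        case True
        have "\<bar>(if x \<in> Ok k then g x else 0)\<bar> \<le> Bg" using Bg[OF True] Bg[OF True] by auto
        moreover have "\<bar>W x * g2 k x\<bar> \<le> r^2/2 * B2"
          unfolding abs_mult by (rule mult_mono) (use Wb[OF True] B2[OF True] in auto)
        ultimately have "\<bar>(if x \<in> Ok k then g x else 0) - W x * g2 k x\<bar> \<le> ?B" by linarith
        then show ?thesis using True by (simp add: G_def)
      qed (simp add: G_def)
    qed
    ultimately show ?thesis by (rule Bochner_Integration.integrable_bound)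
  qed
  have int0: "integrable lborel (\<lambda>x. indicator C x *\<^sub>R g x)"
    by (rule borel_integrable_compact[OF compC contg])
  have "integral C g = integral\<^sup>L lborel (\<lambda>x. indicator C x *\<^sub>R g x)"
  proof -
    have "((\<lambda>x. indicator C x *\<^sub>R g x) has_integral integral\<^sup>L lborel (\<lambda>x. indicator C x *\<^sub>R g x)) UNIV"
      by (rule has_integral_integral_lborel[OF int0])
    moreover have "(\<lambda>x. indicator C x *\<^sub>R g x) = (\<lambda>x. if x \<in> C then g x else 0)"
      by (auto simp: indicator_def)
    ultimately have "(g has_integral integral\<^sup>L lborel (\<lambda>x. indicator C x *\<^sub>R g x)) C"
      using has_integral_restrict_UNIV by metis
    then show ?thesis by (rule integral_unique)
  qed
  also have "\<dots> \<le> integral\<^sup>L lborel (\<lambda>x. \<Sum>k\<in>UNIV. G k x)"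
  proof (rule integral_mono[OF int0])
    show "integrable lborel (\<lambda>x. \<Sum>k\<in>UNIV. G k x)" using Gint by auto
    fix x :: "real^'n"
    show "indicator C x *\<^sub>R g x \<le> (\<Sum>k\<in>UNIV. G k x)"
    proof (cases "x \<in> C")
      case False then show ?thesis by (simp add: G_def)
    next
      case True
      have xU: "x \<in> U" using True CU by auto
      have "(\<Sum>k\<in>UNIV. G k x) = (\<Sum>k\<in>UNIV. (if x \<in> Ok k then g x else 0)) - W x * (\<Sum>k\<in>UNIV. g2 k x)"
        using True by (simp add: G_def sum_subtractf sum_distrib_left)
      also have "(\<Sum>k\<in>UNIV. g2 k x) = 0" using lap[OF xU] by (simp add: g2_def)
      finally have S: "(\<Sum>k\<in>UNIV. G k x) = (\<Sum>k\<in>UNIV. (if x \<in> Ok k then g x else 0))" by simp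
      show ?thesis
      proof (cases "\<exists>k0. x \<in> Ok k0")
        case True
        then obtain k0 where k0: "x \<in> Ok k0" by blast
        have "x \<in> Ok k \<longleftrightarrow> k = k0" for k
        proof
          assume "x \<in> Ok k"
          show "k = k0"
          proof (rule ccontr)
            assume "k \<noteq> k0"
            then have "\<bar>x$k0\<bar> < \<bar>x$k\<bar>" "\<bar>x$k\<bar> < \<bar>x$k0\<bar>"
              using k0 \<open>x \<in> Ok k\<close> by (auto simp: Ok_def)
            then show False by simp
          qed
        qed (use k0 in simp)
        then have "(\<Sum>k\<in>UNIV. (if x \<in> Ok k then g x else 0)) = (\<Sum>k\<in>UNIV. (if k = k0 then g x else 0))"
          by (intro sum.cong) auto
        also have "\<dots> = g x" by simp
        finally show ?thesis using S \<open>x \<in> C\<close> by simp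
      next
        case False
        then have S0: "(\<Sum>k\<in>UNIV. G k x) = 0" using S by simp
        have "Max ((\<lambda>j. \<bar>x$j\<bar>) ` UNIV) \<in> (\<lambda>j. \<bar>x$j\<bar>) ` UNIV"
          by (rule Max_in) auto
        then obtain i where i0: "Max ((\<lambda>j. \<bar>x$j\<bar>) ` UNIV) = \<bar>x$i\<bar>" by blast
        then have i: "\<bar>x$i\<bar> = Max ((\<lambda>j. \<bar>x$j\<bar>) ` UNIV)" by simp
        have il: "\<bar>x$l\<bar> \<le> \<bar>x$i\<bar>" for l unfolding i by (rule Max_ge) auto
        from False have "x \<notin> Ok i" by blast
        then obtain j where j: "j \<noteq> i" "\<not> \<bar>x$j\<bar> < \<bar>x$i\<bar>" by (auto simp: Ok_def)
        have "x \<in> diag_set r"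
          by (rule diag_memI[of x r i j]) (use \<open>x \<in> C\<close> C_def j il[of j] il in auto)
        then have "g x \<le> 0" by (rule neg)
        then show ?thesis using S0 \<open>x \<in> C\<close> by simp
      qed
    qed
  qed
  also have "\<dots> = (\<Sum>k\<in>UNIV. integral\<^sup>L lborel (G k))"
    by (rule Bochner_Integration.integral_sum) (use Gint in auto)
  also have "\<dots> \<le> 0"
  proof (rule sum_nonpos)
    fix k show "integral\<^sup>L lborel (G k) \<le> 0"
    proof (rule slice_nonpos[where k=k, OF Gint])
      fix x :: "real^'n"
      show "integral\<^sup>L lborel (\<lambda>t. G k (vupd x k t)) \<le> 0"
      proof (cases "\<forall>j. j \<noteq> k \<longrightarrow> \<bar>x$j\<bar> \<le> r")
        case False
        then obtain j where j: "j \<noteq> k" "\<not> \<bar>x$j\<bar> \<le> r" by blast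
        have "vupd x k t \<notin> C" for t using j by (auto simp: C_def cube_def)
        then have "(\<lambda>t. G k (vupd x k t)) = (\<lambda>t. 0)" by (auto simp: G_def)
        then show ?thesis by simp
      next
        case True
        define A where "A = (\<lambda>j. \<bar>x$j\<bar>) ` (UNIV - {k})"
        define m where "m = Max A"
        have finA: "finite A" by (simp add: A_def)
        have neA: "A \<noteq> {}" using card_other[OF card, of k] by (simp add: A_def)
        have m0: "0 \<le> m"
        proof -
          obtain a where "a \<in> A" using neA by blast
          moreover then have "a \<le> m" unfolding m_def using finA by (rule Max_ge[rotated])
          ultimately show ?thesis by (auto simp: A_def)
        qed
        have mr: "m \<le> r" unfolding m_def using finA neA True by (auto simp: A_def)
        obtain j where j: "j \<noteq> k" "\<bar>x$j\<bar> = m"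
        proof -
          have "m \<in> A" unfolding m_def using finA neA by (rule Max_in)
          then show ?thesis using that by (auto simp: A_def)
        qed
        have jle: "\<bar>x$l\<bar> \<le> m" if "l \<noteq> k" for l
          unfolding m_def using finA by (rule Max_ge) (use that in \<open>auto simp: A_def\<close>)
        have Mline: "Max ((\<lambda>j. \<bar>vupd x k t $ j\<bar>) ` UNIV) = max \<bar>t\<bar> m" for t
        proof -
          have "(\<lambda>j. \<bar>vupd x k t $ j\<bar>) ` UNIV = insert \<bar>t\<bar> A"
            by (auto simp: A_def image_iff) blast
          then show ?thesis using finA neA by (simp add: m_def Max_insert)
        qed
        have Oline: "vupd x k t \<in> Ok k \<longleftrightarrow> m < \<bar>t\<bar>" for t
        proof -
          have "vupd x k t \<in> Ok k \<longleftrightarrow> (\<forall>a\<in>A. a < \<bar>t\<bar>)" by (auto simp: Ok_def A_def)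
          also have "\<dots> \<longleftrightarrow> m < \<bar>t\<bar>" unfolding m_def using finA neA by simp
          finally show ?thesis .
        qed
        have Cline: "vupd x k t \<in> C \<longleftrightarrow> t \<in> {-r..r}" for t
          using True by (auto simp: C_def cube_def abs_le_iff)
        define u where "u t = g (vupd x k t)" for t
        define v where "v t = blinfun_apply (Dg (vupd x k t)) (axis k 1)" for t
        define w where "w t = g2 k (vupd x k t)" for t
        have d1: "(u has_real_derivative v t) (at t)" if "t \<in> {-r..r}" for t
        proof -
          have "vupd x k t \<in> U" using Cline[of t] that CU by auto
          from line_deriv[OF dg[OF this]] show ?thesis
            unfolding u_def v_def has_real_derivative_iff_has_vector_derivative .
        qed
        have d2: "(v has_real_derivative w t) (at t)" if "t \<in> {-r..r}" for t
        proof -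
          have "vupd x k t \<in> U" using Cline[of t] that CU by auto
          from line_deriv2[OF d2g[OF this]] show ?thesis
            unfolding w_def v_def g2_def has_real_derivative_iff_has_vector_derivative .
        qed
        have HI: "((\<lambda>t. (if m < \<bar>t\<bar> then u t else 0) - (r - max \<bar>t\<bar> m)^2/2 * w t)
                has_integral (r-m)*(u m + u(-m))) {-r..r}"
          by (rule line_ineq[OF m0 mr d1 d2])
        have Geq: "(\<lambda>t. G k (vupd x k t)) = (\<lambda>t. if t \<in> {-r..r} then
                 (if m < \<bar>t\<bar> then u t else 0) - (r - max \<bar>t\<bar> m)^2/2 * w t else 0)"
          by (rule ext) (simp only: G_def W_def Mline, simp add: Cline Oline u_def w_def indicator_def)
        have HU: "((\<lambda>t. G k (vupd x k t)) has_integral (r-m)*(u m + u(-m))) UNIV"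
          unfolding Geq has_integral_restrict_UNIV by (rule HI)
        have "u m \<le> 0" "u (-m) \<le> 0"
        proof -
          have "vupd x k s \<in> diag_set r" if s: "\<bar>s\<bar> = m" for s
          proof (rule diag_memI[of _ r k j])
            show "vupd x k s \<in> cube r" using Cline[of s] s mr by (auto simp: C_def)
            show "k \<noteq> j" using j by simp
            show "\<bar>vupd x k s $ k\<bar> = \<bar>vupd x k s $ j\<bar>" using j s by simp
            show "\<bar>vupd x k s $ l\<bar> \<le> \<bar>vupd x k s $ k\<bar>" for l using jle[of l] s by simp
          qed
          then show "u m \<le> 0" "u (-m) \<le> 0" unfolding u_def using neg m0 by auto
        qed
        then have val: "(r-m)*(u m + u(-m)) \<le> 0" using mr
          by (intro mult_nonneg_nonpos) auto
        show ?thesis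
        proof (cases "integrable lborel (\<lambda>t. G k (vupd x k t))")
          case True
          have "integral\<^sup>L lborel (\<lambda>t. G k (vupd x k t)) = (r-m)*(u m + u(-m))"
            using has_integral_unique[OF has_integral_integral_lborel[OF True] HU] .
          then show ?thesis using val by simp
        next
          case False
          then show ?thesis by (simp add: not_integrable_integral_eq)
        qed
      qed
    qed
  qed
  finally show ?thesis unfolding C_def .
qed

lemma blinfun_minus_fun: "blinfun_apply (A - B) = (\<lambda>v. blinfun_apply A v - blinfun_apply B v)"
  by (rule ext) (simp add: blinfun.diff_left)

theorem theorem3:
  fixes r :: real and f hstar :: "real^'n \<Rightarrow> real"
  assumes "CARD('n) \<ge> 2"
    and "r > 0"
    and "continuous_on (cube r) f"
    and "hstar \<in> harmonic_below (cube r) f"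
    and "\<forall>x\<in>diag_set r. f x - hstar x = 0"
  shows "\<forall>h\<in>harmonic_below (cube r) f.
           L1norm (cube r) (\<lambda>x. f x - hstar x) \<le> L1norm (cube r) (\<lambda>x. f x - h x)"
proof
  fix h assume h: "h \<in> harmonic_below (cube r) f"
  let ?C = "cube r :: (real^'n) set"
  obtain U1 Dh1 D2h1 where U1: "?C \<subseteq> U1" "open U1"
    and dh1: "\<forall>x\<in>U1. (hstar has_derivative blinfun_apply (Dh1 x)) (at x)"
    and d2h1: "\<forall>x\<in>U1. (Dh1 has_derivative blinfun_apply (D2h1 x)) (at x)"
    and c1: "continuous_on U1 D2h1"
    and l1: "\<forall>x\<in>U1. (\<Sum>i\<in>UNIV. blinfun_apply (blinfun_apply (D2h1 x) (axis i 1)) (axis i 1)) = 0"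
    and le1: "\<forall>x\<in>?C. hstar x \<le> f x"
    using assms(4) unfolding harmonic_below_def harmonic_near_def harmonic_on_def by blast
  obtain U2 Dh2 D2h2 where U2: "?C \<subseteq> U2" "open U2"
    and dh2: "\<forall>x\<in>U2. (h has_derivative blinfun_apply (Dh2 x)) (at x)"
    and d2h2: "\<forall>x\<in>U2. (Dh2 has_derivative blinfun_apply (D2h2 x)) (at x)"
    and c2: "continuous_on U2 D2h2"
    and l2: "\<forall>x\<in>U2. (\<Sum>i\<in>UNIV. blinfun_apply (blinfun_apply (D2h2 x) (axis i 1)) (axis i 1)) = 0"
    and le2: "\<forall>x\<in>?C. h x \<le> f x"
    using h unfolding harmonic_below_def harmonic_near_def harmonic_on_def by blast
  define U where "U = U1 \<inter> U2"
  define g where "g x = h x - hstar x" for x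
  have gint: "integral ?C g \<le> 0"
  proof (rule core[where U=U and Dg="\<lambda>x. Dh2 x - Dh1 x" and D2g="\<lambda>x. D2h2 x - D2h1 x"])
    show "CARD('n) \<ge> 2" "r > 0" by (fact assms(1), fact assms(2))
    show "open U" using U1 U2 by (auto simp: U_def)
    show "?C \<subseteq> U" using U1 U2 by (auto simp: U_def)
    fix x
    show "x \<in> U \<Longrightarrow> (g has_derivative blinfun_apply (Dh2 x - Dh1 x)) (at x)"
      unfolding blinfun_minus_fun g_def U_def using dh1 dh2 by (auto intro!: has_derivative_diff)
    show "x \<in> U \<Longrightarrow> ((\<lambda>x. Dh2 x - Dh1 x) has_derivative blinfun_apply (D2h2 x - D2h1 x)) (at x)"
      unfolding blinfun_minus_fun U_def using d2h1 d2h2 by (auto intro!: has_derivative_diff)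
    show "x \<in> U \<Longrightarrow> (\<Sum>i\<in>UNIV. blinfun_apply (blinfun_apply (D2h2 x - D2h1 x) (axis i 1)) (axis i 1)) = 0"
      using l1 l2 unfolding U_def by (simp add: blinfun.diff_left sum_subtractf)
    show "x \<in> diag_set r \<Longrightarrow> g x \<le> 0"
    proof -
      assume xd: "x \<in> diag_set r"
      then have "x \<in> ?C" by (auto simp: diag_set_def)
      then show "g x \<le> 0" using le2 assms(5) xd by (auto simp: g_def)
    qed
  next
    show "continuous_on U (\<lambda>x. D2h2 x - D2h1 x)"
      using c1 c2 unfolding U_def by (intro continuous_on_diff) (auto intro: continuous_on_subset)
  qed
  have Ccb: "?C = cbox (\<chi> i. -r) (\<chi> i. r)" by (rule cube_cbox)
  have contgh: "continuous_on ?C hstar" "continuous_on ?C h"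
    using dh1 dh2 U1 U2 by (meson continuous_at_imp_continuous_on has_derivative_continuous subsetD)+
  have cont1: "continuous_on ?C (\<lambda>x. f x - hstar x)" using assms(3) contgh by (intro continuous_on_diff)
  have cont2: "continuous_on ?C (\<lambda>x. f x - h x)" using assms(3) contgh by (intro continuous_on_diff)
  have setC: "?C \<in> sets lebesgue"
    unfolding cube_cbox by (rule fmeasurableD[OF lmeasurable_cbox])
  have L1: "L1norm ?C (\<lambda>x. f x - hstar x) = integral ?C (\<lambda>x. f x - hstar x)"
  proof -
    have "L1norm ?C (\<lambda>x. f x - hstar x) = integral\<^sup>L (lebesgue_on ?C) (\<lambda>x. f x - hstar x)"
      unfolding L1norm_def using le1 by (intro Bochner_Integration.integral_cong) (auto simp: space_restrict_space)
    also have "\<dots> = integral ?C (\<lambda>x. f x - hstar x)"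
      by (rule lebesgue_integral_eq_integral[OF _ setC]) (use cont1 Ccb continuous_imp_integrable in metis)
    finally show ?thesis .
  qed
  have L2: "L1norm ?C (\<lambda>x. f x - h x) = integral ?C (\<lambda>x. f x - h x)"
  proof -
    have "L1norm ?C (\<lambda>x. f x - h x) = integral\<^sup>L (lebesgue_on ?C) (\<lambda>x. f x - h x)"
      unfolding L1norm_def using le2 by (intro Bochner_Integration.integral_cong) (auto simp: space_restrict_space)
    also have "\<dots> = integral ?C (\<lambda>x. f x - h x)"
      by (rule lebesgue_integral_eq_integral[OF _ setC]) (use cont2 Ccb continuous_imp_integrable in metis)
    finally show ?thesis .
  qed
  have i1: "(\<lambda>x. f x - hstar x) integrable_on ?C" using cont1 Ccb integrable_continuous by metis
  have i2: "g integrable_on ?C"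
  proof -
    have "continuous_on ?C g" unfolding g_def using contgh by (intro continuous_on_diff)
    then show ?thesis using Ccb integrable_continuous by metis
  qed
  have "(\<lambda>x. f x - h x) = (\<lambda>x. (f x - hstar x) - g x)" by (auto simp: g_def)
  then have "integral ?C (\<lambda>x. f x - h x) = integral ?C (\<lambda>x. f x - hstar x) - integral ?C g"
    using integral_diff[OF i1 i2] by simp
  then show "L1norm ?C (\<lambda>x. f x - hstar x) \<le> L1norm ?C (\<lambda>x. f x - h x)"
    using L1 L2 gint by simp
qed

end
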